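(* Let $\mu\in\mathbb C$, $\mu\ne1$, and let $x_1,\dots,x_M$ and $y_1,\dots,y_N$ be complex numbers (pairwise distinct within each family and $x_a\neq y_b$, so that the expressions are defined). Then $$\mathcal A^+_{\{y\}}\!\left[\mu E^-_{\{x\}}\right]=(1-\mu)^{N-M}\mathcal A^-_{\{x\}}\!\left[\mu E^+_{\{y\}}\right].$$
   Context: Let $\eta\in\mathbb C\setminus\{0\}$. For a family $\{x\}=\{x_1,\dots,x_M\}$ and $y\in\mathbb C$, $E^\pm_{\{x\}}(y)=\prod_{n=1}^M\frac{y-x_n\pm\eta}{y-x_n}$. With $V(x_1,\dots,x_M)=\prod_{1\le b<a\le M}(x_a-x_b)$, for pairwise distinct $x_a$ and a function $f$ defined there, $\mathcal A^\pm_{\{x\}}[f]=\det_{1\le a,b\le M}[x_a^{b-1}-f(x_a)(x_a\pm\eta)^{b-1}]/V(x_1,\dots,x_M)$. *)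

theory Defs
  imports Complex_Main "Jordan_Normal_Form.Determinant"
begin

definition Eplus :: "complex \<Rightarrow> complex list \<Rightarrow> complex \<Rightarrow> complex" where
  "Eplus eta xs y = (\<Prod>n<length xs. (y - xs ! n + eta) / (y - xs ! n))"

definition Eminus :: "complex \<Rightarrow> complex list \<Rightarrow> complex \<Rightarrow> complex" where
  "Eminus eta xs y = (\<Prod>n<length xs. (y - xs ! n - eta) / (y - xs ! n))"

definition Vand :: "complex list \<Rightarrow> complex" where
  "Vand xs = (\<Prod>(a, b)\<in>{(a, b). b < a \<and> a < length xs}. xs ! a - xs ! b)"

definition Aplus :: "complex \<Rightarrow> complex list \<Rightarrow> (complex \<Rightarrow> complex) \<Rightarrow> complex" where
  "Aplus eta xs f =
     det (mat (length xs) (length xs)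
       (\<lambda>(a, b). (xs ! a) ^ b - f (xs ! a) * (xs ! a + eta) ^ b)) / Vand xs"

definition Aminus :: "complex \<Rightarrow> complex list \<Rightarrow> (complex \<Rightarrow> complex) \<Rightarrow> complex" where
  "Aminus eta xs f =
     det (mat (length xs) (length xs)
       (\<lambda>(a, b). (xs ! a) ^ b - f (xs ! a) * (xs ! a - eta) ^ b)) / Vand xs"

end

theory Submission
  imports Defs
begin


lemma shift_det:
  fixes B :: "'a::comm_ring_1 mat"
  assumes B: "B \<in> carrier_mat (Suc m) (Suc m)" and last: "\<And>j. j < Suc m \<Longrightarrow> B$$(m,j) = z^j"
  shows "det B = (-1)^m * det (mat m m (\<lambda>(i,j). B$$(i,Suc j) - z * B$$(i,j)))"
proof -
  define C where "C = mat (Suc m) (Suc m) (\<lambda>(i,j). if i = j then 1 else if Suc i = j then -z else (0::'a))"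
  have C: "C \<in> carrier_mat (Suc m) (Suc m)" unfolding C_def by auto
  have ut: "upper_triangular C" unfolding C_def upper_triangular_def by auto
  have dg: "diag_mat C = map (\<lambda>i. 1) [0..<Suc m]"
    unfolding diag_mat_def C_def by (intro map_cong) auto
  have pl: "prod_list (map (\<lambda>i. (1::'a)) xs) = 1" for xs :: "nat list" by (induct xs) auto
  have dC: "det C = 1" using det_upper_triangular[OF ut C] unfolding dg pl .
  define BC where "BC = mat (Suc m) (Suc m) (\<lambda>(i,j). if j = 0 then B$$(i,0) else B$$(i,j) - z*B$$(i,j-1))"
  have eq: "B * C = BC"
  proof (rule eq_matI)
    fix i j assume i: "i < dim_row BC" and j: "j < dim_col BC"
    hence i': "i < Suc m" and j': "j < Suc m" unfolding BC_def by auto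
    have "(B * C) $$ (i,j) = (\<Sum>k<Suc m. B$$(i,k) * C$$(k,j))"
      using B C i' j' by (simp add: scalar_prod_def atLeast0LessThan)
    also have "\<dots> = (\<Sum>k<Suc m. (if k = j then B$$(i,j) else 0) + (if Suc k = j then -z*B$$(i,k) else 0))"
      by (rule sum.cong, auto simp: C_def j')
    also have "\<dots> = BC $$ (i,j)"
      using i' j' by (cases j) (auto simp: sum.distrib BC_def)
    finally show "(B * C) $$ (i,j) = BC $$ (i,j)" .
  qed (insert B C, auto simp: BC_def)
  have BCc: "BC \<in> carrier_mat (Suc m) (Suc m)" unfolding BC_def by auto
  have "det B = det BC" using det_mult[OF B C] dC eq by simp
  also have "\<dots> = (\<Sum>j<Suc m. BC $$ (m,j) * cofactor BC m j)"
    by (rule laplace_expansion_row[OF BCc], simp)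
  also have "\<dots> = (\<Sum>j<Suc m. if j = 0 then cofactor BC m 0 else 0)"
  proof (rule sum.cong[OF refl])
    fix j assume j: "j \<in> {..<Suc m}"
    show "BC $$ (m,j) * cofactor BC m j = (if j = 0 then cofactor BC m 0 else 0)"
    proof (cases j)
      case 0 thus ?thesis using last[of 0] by (simp add: BC_def)
    next
      case (Suc k) thus ?thesis using j last[of j] last[of k] by (simp add: BC_def)
    qed
  qed
  also have "\<dots> = cofactor BC m 0" by (simp add: sum.delta')
  finally have "det B = cofactor BC m 0" .
  moreover have "mat_delete BC m 0 = mat m m (\<lambda>(i,j). B$$(i,Suc j) - z * B$$(i,j))"
    by (rule eq_matI, auto simp: mat_delete_def BC_def)
  ultimately show ?thesis unfolding cofactor_def by simp
qed


lemma det_scale_rows: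
  fixes F :: "nat \<Rightarrow> nat \<Rightarrow> 'a::comm_ring_1"
  shows "det (mat n n (\<lambda>(i,j). c i * F i j)) = (\<Prod>i<n. c i) * det (mat n n (\<lambda>(i,j). F i j))"
proof -
  have a: "(\<lambda>i. vec n (F i)) \<in> {0..<n} \<rightarrow> carrier_vec n" by auto
  have e1: "mat n n (\<lambda>(i,j). c i * F i j) = mat\<^sub>r n n (\<lambda>i. c i \<cdot>\<^sub>v vec n (F i))"
    by (rule eq_matI) auto
  have e2: "mat n n (\<lambda>(i,j). F i j) = mat\<^sub>r n n (\<lambda>i. vec n (F i))"
    by (rule eq_matI) auto
  show ?thesis unfolding e1 e2 det_rows_mul[OF a] by (simp add: atLeast0LessThan)
qed

lemma prod_neg_swap: "(-1)^n * (\<Prod>i<n. f i - (z::'a::comm_ring_1)) = (\<Prod>i<n. z - f i)"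
proof -
  have "(\<Prod>i<n. z - f i) = (\<Prod>i<n. (-1) * (f i - z))" by (rule prod.cong) auto
  also have "\<dots> = (-1)^n * (\<Prod>i<n. f i - z)" by (simp only: prod.distrib prod_constant card_lessThan)
  finally show ?thesis by simp
qed

lemma Vand_snoc: "Vand (xs @ [z]) = Vand xs * (\<Prod>b<length xs. z - xs ! b)"
proof -
  let ?n = "length xs"
  let ?f = "\<lambda>(a,b). (xs @ [z]) ! a - (xs @ [z]) ! b"
  have S: "{(a, b). b < a \<and> a < length (xs @ [z])} = {(a, b). b < a \<and> a < ?n} \<union> (\<lambda>b. (?n, b)) ` {..<?n}"
    by auto
  have fin: "finite {(a, b). b < a \<and> a < ?n}"
    by (rule finite_subset[of _ "{..<?n} \<times> {..<?n}"]) auto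
  have "Vand (xs @ [z]) = prod ?f {(a, b). b < a \<and> a < ?n} * prod ?f ((\<lambda>b. (?n, b)) ` {..<?n})"
    unfolding Vand_def S by (rule prod.union_disjoint) (use fin in auto)
  also have "prod ?f {(a, b). b < a \<and> a < ?n} = Vand xs"
    unfolding Vand_def by (rule prod.cong) (auto simp: nth_append)
  also have "prod ?f ((\<lambda>b. (?n, b)) ` {..<?n}) = (\<Prod>b<?n. z - xs ! b)"
    by (subst prod.reindex) (auto simp: inj_on_def nth_append)
  finally show ?thesis .
qed

lemma Vand_nonzero: "distinct xs \<Longrightarrow> Vand xs \<noteq> 0"
proof -
  assume d: "distinct xs"
  have fin: "finite {(a, b). b < a \<and> a < length xs}"
    by (rule finite_subset[of _ "{..<length xs} \<times> {..<length xs}"]) auto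
  have "\<forall>p\<in>{(a, b). b < a \<and> a < length xs}. (case p of (a,b) \<Rightarrow> xs ! a - xs ! b) \<noteq> 0"
  proof (intro ballI)
    fix p assume "p \<in> {(a, b). b < a \<and> a < length xs}"
    then obtain a b where p: "p = (a,b)" "b < a" "a < length xs" by blast
    have "xs ! a \<noteq> xs ! b" using nth_eq_iff_index_eq[OF d, of a b] p by simp
    thus "(case p of (a,b) \<Rightarrow> xs ! a - xs ! b) \<noteq> 0" using p by simp
  qed
  thus ?thesis unfolding Vand_def by (subst prod_zero_iff[OF fin]) blast
qed

lemma det_vander: "det (mat (length xs) (length xs) (\<lambda>(a,b). (xs ! a) ^ b)) = Vand xs"
proof (induct xs rule: rev_induct)
  case Nil
  show ?case by (simp add: Vand_def)
next
  case (snoc z xs)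
  let ?m = "length xs"
  have "det (mat (length (xs@[z])) (length (xs@[z])) (\<lambda>(a,b). ((xs@[z]) ! a) ^ b))
      = (-1)^?m * det (mat ?m ?m (\<lambda>(i,j). (xs!i - z) * xs ! i ^ j))"
    by (subst shift_det[where z = z and m = ?m]) (auto intro!: arg_cong[where f = det] eq_matI simp: nth_append algebra_simps)
  also have "\<dots> = (-1)^?m * ((\<Prod>i<?m. xs!i - z) * Vand xs)"
    using det_scale_rows[where c = "\<lambda>i. xs!i - z" and F = "\<lambda>i j. xs ! i ^ j" and n = ?m] snoc by simp
  also have "\<dots> = Vand (xs @ [z])"
    unfolding Vand_snoc prod_neg_swap[symmetric, where f = "\<lambda>i. xs ! i" and n = ?m and z = z]
    by (simp only: mult_ac)
  finally show ?case .
qed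




lemma perm_ratio:
  fixes F :: "complex \<Rightarrow> nat \<Rightarrow> complex"
  assumes m: "mset ys = mset xs" and d: "distinct xs"
  shows "det (mat (length ys) (length ys) (\<lambda>(a,b). F (ys!a) b)) / Vand ys
       = det (mat (length xs) (length xs) (\<lambda>(a,b). F (xs!a) b)) / Vand xs"
proof -
  obtain p where p: "p permutes {..<length xs}" and pl: "permute_list p xs = ys"
    using mset_eq_permutation[OF m] by blast
  have len: "length ys = length xs" using m by (metis size_mset)
  let ?n = "length xs"
  have p': "p permutes {0..<?n}" using p by (simp add: atLeast0LessThan)
  have ysn: "\<And>i. i < ?n \<Longrightarrow> ys ! i = xs ! p i" using permute_list_nth[OF p] pl by blast
  have pin: "\<And>i. i < ?n \<Longrightarrow> p i < ?n" using p by (meson lessThan_iff permutes_in_image)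
  have e1: "mat ?n ?n (\<lambda>(a,b). F (ys!a) b) = mat ?n ?n (\<lambda>(i,j). mat ?n ?n (\<lambda>(a,b). F (xs!a) b) $$ (p i, j))"
    by (rule eq_matI) (auto simp: ysn pin)
  have e2: "mat ?n ?n (\<lambda>(a,b). (ys!a)^b) = mat ?n ?n (\<lambda>(i,j). mat ?n ?n (\<lambda>(a,b). (xs!a)^b) $$ (p i, j))"
    by (rule eq_matI) (auto simp: ysn pin)
  have s: "(signof p :: complex) \<noteq> 0" by (simp add: sign_def)
  have "det (mat ?n ?n (\<lambda>(i,j). mat ?n ?n (\<lambda>(a,b). (xs!a)^b) $$ (p i, j))) = signof p * det (mat ?n ?n (\<lambda>(a,b). (xs!a)^b))"
    by (rule det_permute_rows[OF _ p']) simp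
  hence "Vand ys = signof p * Vand xs"
    using det_vander[of ys] det_vander[of xs] unfolding len e2 by simp
  moreover have "det (mat ?n ?n (\<lambda>(a,b). F (ys!a) b)) = signof p * det (mat ?n ?n (\<lambda>(a,b). F (xs!a) b))"
    unfolding e1 by (rule det_permute_rows[OF _ p']) simp
  ultimately show ?thesis using s unfolding len by simp
qed


lemma prod_list_const: "prod_list (map (\<lambda>i. a) xs) = (a::'a::comm_monoid_mult) ^ length xs"
  by (induct xs) auto

lemma det_base:
  fixes xs :: "complex list"
  shows "det (mat (length xs) (length xs) (\<lambda>(a,b). xs!a^b - c*(xs!a+e)^b)) = (1-c)^length xs * Vand xs"
proof -
  let ?n = "length xs"
  define V where "V = mat ?n ?n (\<lambda>(a,b). xs!a^b)"
  define C where "C = mat ?n ?n (\<lambda>(k,b). (if k = b then 1 else 0) - c * of_nat (b choose k) * e^(b-k))"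
  have V: "V \<in> carrier_mat ?n ?n" and C: "C \<in> carrier_mat ?n ?n" unfolding V_def C_def by auto
  have eq: "V * C = mat ?n ?n (\<lambda>(a,b). xs!a^b - c*(xs!a+e)^b)"
  proof (rule eq_matI)
    fix a b assume a: "a < dim_row (mat ?n ?n (\<lambda>(a,b). xs!a^b - c*(xs!a+e)^b))"
      and b: "b < dim_col (mat ?n ?n (\<lambda>(a,b). xs!a^b - c*(xs!a+e)^b))"
    hence a: "a < ?n" and b: "b < ?n" by auto
    have "(V * C) $$ (a,b) = (\<Sum>k<?n. xs!a^k * ((if k = b then 1 else 0) - c * of_nat (b choose k) * e^(b-k)))"
      using V C a b by (simp add: scalar_prod_def atLeast0LessThan V_def C_def)
    also have "\<dots> = (\<Sum>k<?n. (if k = b then xs!a^b else 0)) - c * (\<Sum>k<?n. of_nat (b choose k) * xs!a^k * e^(b-k))"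
    proof -
      have "(\<Sum>k<?n. xs!a^k * ((if k = b then 1 else 0) - c * of_nat (b choose k) * e^(b-k)))
          = (\<Sum>k<?n. (if k = b then xs!a^b else 0) - c * (of_nat (b choose k) * xs!a^k * e^(b-k)))"
        by (rule sum.cong) (auto simp: algebra_simps)
      thus ?thesis by (simp only: sum_subtractf sum_distrib_left)
    qed
    also have "(\<Sum>k<?n. of_nat (b choose k) * xs!a^k * e^(b-k)) = (\<Sum>k\<le>b. of_nat (b choose k) * xs!a^k * e^(b-k))"
      by (rule sum.mono_neutral_right) (use b in auto)
    also have "\<dots> = (xs!a+e)^b" by (simp add: binomial_ring)
    finally show "(V * C) $$ (a,b) = mat ?n ?n (\<lambda>(a,b). xs!a^b - c*(xs!a+e)^b) $$ (a,b)"
      using a b by simp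
  qed (auto simp: V_def C_def)
  have ut: "upper_triangular C" unfolding C_def upper_triangular_def by auto
  have dg: "diag_mat C = map (\<lambda>i. 1 - c) [0..<?n]"
    unfolding diag_mat_def C_def by (intro map_cong) auto
  have dC: "det C = (1-c)^?n" using det_upper_triangular[OF ut C] unfolding dg prod_list_const by simp
  have "det (V * C) = det V * det C" by (rule det_mult[OF V C])
  moreover have "det V = Vand xs" unfolding V_def by (rule det_vander)
  ultimately show ?thesis unfolding eq dC by simp
qed




lemma coeff_mult_le:
  fixes p q :: "'a::comm_semiring_0 poly"
  assumes "degree p \<le> m" "degree q \<le> n"
  shows "coeff (p * q) (m + n) = coeff p m * coeff q n"
proof -
  have "coeff (p * q) (m + n) = (\<Sum>i\<le>m+n. coeff p i * coeff q (m + n - i))" by (rule coeff_mult)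
  also have "\<dots> = (\<Sum>i\<le>m+n. if i = m then coeff p m * coeff q n else 0)"
  proof (rule sum.cong[OF refl])
    fix i assume "i \<in> {..m+n}"
    show "coeff p i * coeff q (m + n - i) = (if i = m then coeff p m * coeff q n else 0)"
    proof (cases "i = m")
      case False
      show ?thesis
      proof (cases "i < m")
        case True
        hence "coeff q (m + n - i) = 0" using assms(2) by (intro coeff_eq_0) linarith
        thus ?thesis using False by simp
      next
        case False': False
        hence "coeff p i = 0" using assms(1) False by (intro coeff_eq_0) linarith
        thus ?thesis using False by simp
      qed
    qed simp
  qed
  also have "\<dots> = coeff p m * coeff q n" by simp
  finally show ?thesis .
qed

lemma coeff_prod_linear:
  fixes f :: "'b \<Rightarrow> 'a::comm_semiring_1 poly"
  assumes "finite I" "\<And>i. i \<in> I \<Longrightarrow> degree (f i) \<le> 1"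
  shows "degree (\<Prod>i\<in>I. f i) \<le> card I \<and> coeff (\<Prod>i\<in>I. f i) (card I) = (\<Prod>i\<in>I. coeff (f i) 1)"
  using assms
proof (induct I rule: finite_induct)
  case empty
  show ?case by simp
next
  case (insert a I)
  have d: "degree (\<Prod>i\<in>I. f i) \<le> card I" and c: "coeff (\<Prod>i\<in>I. f i) (card I) = (\<Prod>i\<in>I. coeff (f i) 1)"
    using insert by auto
  have da: "degree (f a) \<le> 1" using insert by auto
  have "degree (f a * (\<Prod>i\<in>I. f i)) \<le> 1 + card I"
    using degree_mult_le[of "f a" "\<Prod>i\<in>I. f i"] da d by linarith
  moreover have "coeff (f a * (\<Prod>i\<in>I. f i)) (1 + card I) = coeff (f a) 1 * (\<Prod>i\<in>I. coeff (f i) 1)"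
    using coeff_mult_le[OF da d] c by simp
  ultimately show ?case using insert by simp
qed

lemma coeff_det_linear:
  fixes A :: "'a::comm_ring_1 poly mat"
  assumes A: "A \<in> carrier_mat n n" and deg: "\<And>i j. i < n \<Longrightarrow> j < n \<Longrightarrow> degree (A $$ (i,j)) \<le> 1"
  shows "coeff (det A) n = det (map_mat (\<lambda>p. coeff p 1) A)"
proof -
  have B: "map_mat (\<lambda>p. coeff p 1) A \<in> carrier_mat n n" using A by simp
  have "coeff (det A) n = (\<Sum>p\<in>{p. p permutes {0..<n}}. coeff (signof p * (\<Prod>i = 0..<n. A $$ (i, p i))) n)"
    unfolding det_def'[OF A] by (simp add: coeff_sum)
  also have "\<dots> = (\<Sum>p\<in>{p. p permutes {0..<n}}. signof p * (\<Prod>i = 0..<n. map_mat (\<lambda>p. coeff p 1) A $$ (i, p i)))"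
  proof (rule sum.cong[OF refl])
    fix p assume p: "p \<in> {p. p permutes {0..<n}}"
    have pin: "\<And>i. i < n \<Longrightarrow> p i < n" using p by (simp add: permutes_in_image)
    have "coeff (\<Prod>i = 0..<n. A $$ (i, p i)) (card {0..<n}) = (\<Prod>i = 0..<n. coeff (A $$ (i, p i)) 1)"
      by (rule conjunct2[OF coeff_prod_linear]) (use deg pin in auto)
    hence "coeff (\<Prod>i = 0..<n. A $$ (i, p i)) n = (\<Prod>i = 0..<n. map_mat (\<lambda>p. coeff p 1) A $$ (i, p i))"
      using A pin by simp
    moreover have "signof p * q = smult (signof p) q" for q :: "'a poly"
      by (simp add: sign_def)
    ultimately show "coeff (signof p * (\<Prod>i = 0..<n. A $$ (i, p i))) n
      = signof p * (\<Prod>i = 0..<n. map_mat (\<lambda>p. coeff p 1) A $$ (i, p i))" by simp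
  qed
  also have "\<dots> = det (map_mat (\<lambda>p. coeff p 1) A)" unfolding det_def'[OF B] ..
  finally show ?thesis .
qed

lemma poly_det: "poly (det A) t = det (map_mat (\<lambda>p. poly p t) A)"
proof -
  interpret h: comm_ring_hom "\<lambda>p. poly p t" by unfold_locales auto
  show ?thesis by simp
qed

definition lp :: "complex list \<Rightarrow> complex poly" where
  "lp xs = prod_list (map (\<lambda>x. [:-x, 1:]) xs)"

lemma poly_lp: "poly (lp xs) t = prod_list (map (\<lambda>x. t - x) xs)"
  unfolding lp_def by (induct xs) (auto simp: algebra_simps)

lemma degree_lp: "degree (lp xs) = length xs \<and> coeff (lp xs) (length xs) = 1"
proof (induct xs)
  case Nil thus ?case by (simp add: lp_def)
next
  case (Cons x xs)
  have "lp (x # xs) = [:-x,1:] * lp xs" by (simp add: lp_def)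
  moreover have "degree ([:-x,1:] * lp xs) = Suc (length xs)"
    using Cons by (subst degree_mult_eq) auto
  moreover have "coeff ([:-x,1:] * lp xs) (1 + length xs) = 1"
    using coeff_mult_le[of "[:-x,1:]" 1 "lp xs" "length xs"] Cons by simp
  ultimately show ?case by simp
qed




definition Ag :: "complex \<Rightarrow> complex list \<Rightarrow> (complex \<Rightarrow> complex) \<Rightarrow> complex" where
  "Ag e xs f = det (mat (length xs) (length xs) (\<lambda>(a,b). (xs!a)^b - f (xs!a) * (xs!a + e)^b)) / Vand xs"

definition Eg :: "complex \<Rightarrow> complex list \<Rightarrow> complex \<Rightarrow> complex" where
  "Eg e xs y = prod_list (map (\<lambda>x. (y - x + e) / (y - x)) xs)"

lemma prod_list_nth: "prod_list (map g xs) = (\<Prod>i<length xs. g (xs!i))"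
  by (induct xs) (auto simp: prod.lessThan_Suc_shift simp del: prod.lessThan_Suc)

lemma prod_list_remove1: "x \<in> set xs \<Longrightarrow> prod_list (map g xs) = g x * prod_list (map (g::_\<Rightarrow>'a::comm_monoid_mult) (remove1 x xs))"
  by (induct xs) (auto simp: mult.left_commute)

lemma prod_list_div: "prod_list (map (\<lambda>x. a x / b x) xs) = prod_list (map a xs) / prod_list (map (b::_\<Rightarrow>'a::field) xs)"
  by (induct xs) auto

lemma prod_list_nonzero: "(\<And>x. x \<in> set xs \<Longrightarrow> g x \<noteq> 0) \<Longrightarrow> prod_list (map (g::_\<Rightarrow>'a::field) xs) \<noteq> 0"
  by (induct xs) auto

lemma cofactor_cong:
  assumes "A \<in> carrier_mat (Suc n) (Suc n)" "B \<in> carrier_mat (Suc n) (Suc n)"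
    and "\<And>a b. a < n \<Longrightarrow> b < Suc n \<Longrightarrow> A $$ (a,b) = B $$ (a,b)"
  shows "cofactor A n j = cofactor B n j"
proof -
  have "mat_delete A n j = mat_delete B n j"
  proof (rule eq_matI)
    fix i k assume "i < dim_row (mat_delete B n j)" "k < dim_col (mat_delete B n j)"
    hence "i < n" "k < n" using assms(2) by auto
    thus "mat_delete A n j $$ (i,k) = mat_delete B n j $$ (i,k)"
      unfolding mat_delete_def using assms by (auto intro!: assms(3))
  qed (use assms in auto)
  thus ?thesis unfolding cofactor_def by simp
qed

lemma Ag_Nil[simp]: "Ag e [] f = 1"
  by (simp add: Ag_def Vand_def)

context
  fixes \<eta> \<mu> :: complex and xs ys :: "complex list"
begin

definition "Pv t = prod_list (map (\<lambda>x. t - x) xs)"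
definition "Pe t = prod_list (map (\<lambda>x. t - (x + \<eta>)) xs)"
definition "fL y = \<mu> * Eg (-\<eta>) xs y"
definition "G b = lp xs * monom 1 b - smult \<mu> (lp (map (\<lambda>x. x + \<eta>) xs) * [:\<eta>,1:]^b)"

lemma poly_G: "poly (G b) t = Pv t * t^b - \<mu> * Pe t * (t + \<eta>)^b"
  unfolding G_def Pv_def Pe_def by (simp add: poly_lp poly_monom o_def add.commute)

lemma fL_key: "t \<notin> set xs \<Longrightarrow> fL t * Pv t = \<mu> * Pe t"
proof -
  assume t: "t \<notin> set xs"
  have nz: "Pv t \<noteq> 0" unfolding Pv_def by (rule prod_list_nonzero) (use t in auto)
  have "Eg (-\<eta>) xs t = Pe t / Pv t"
    unfolding Eg_def Pe_def Pv_def prod_list_div[symmetric] by (simp add: algebra_simps)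
  thus ?thesis using nz unfolding fL_def by simp
qed


definition "rowL a b = ys!a^b - fL (ys!a) * (ys!a+\<eta>)^b"
definition "Kmat = mat (Suc (length ys)) (Suc (length ys)) (\<lambda>(a,b). if a < length ys then rowL a b else 0)"
definition "Lt t = mat (Suc (length ys)) (Suc (length ys)) (\<lambda>(a,b). if a < length ys then rowL a b else poly (G b) t)"
definition "PL = (\<Sum>b<Suc (length ys). smult (cofactor Kmat (length ys) b) (G b))"

lemma poly_PL: "poly PL t = det (Lt t)"
proof -
  let ?n = "length ys"
  have Lc: "Lt t \<in> carrier_mat (Suc ?n) (Suc ?n)" unfolding Lt_def by simp
  have "det (Lt t) = (\<Sum>b<Suc ?n. Lt t $$ (?n,b) * cofactor (Lt t) ?n b)"
    by (rule laplace_expansion_row[OF Lc]) simp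
  also have "\<dots> = (\<Sum>b<Suc ?n. cofactor Kmat ?n b * poly (G b) t)"
  proof (rule sum.cong[OF refl])
    fix b assume b: "b \<in> {..<Suc ?n}"
    have "cofactor (Lt t) ?n b = cofactor Kmat ?n b"
      by (rule cofactor_cong) (auto simp: Lt_def Kmat_def)
    thus "Lt t $$ (?n,b) * cofactor (Lt t) ?n b = cofactor Kmat ?n b * poly (G b) t"
      using b by (simp add: Lt_def)
  qed
  also have "\<dots> = poly PL t" unfolding PL_def by (simp add: poly_sum)
  finally show ?thesis by simp
qed

lemma det_Lt:
  assumes t: "t \<notin> set xs"
  shows "det (Lt t) = Pv t * det (mat (Suc (length ys)) (Suc (length ys))
      (\<lambda>(a,b). (ys@[t])!a^b - fL ((ys@[t])!a) * ((ys@[t])!a+\<eta>)^b))"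
proof -
  let ?n = "length ys"
  let ?c = "\<lambda>a. if a = ?n then Pv t else 1"
  let ?F = "\<lambda>a b. (ys@[t])!a^b - fL ((ys@[t])!a) * ((ys@[t])!a+\<eta>)^b"
  have "Lt t = mat (Suc ?n) (Suc ?n) (\<lambda>(a,b). ?c a * ?F a b)"
  proof (rule eq_matI)
    fix a b assume "a < dim_row (mat (Suc ?n) (Suc ?n) (\<lambda>(a,b). ?c a * ?F a b))"
      "b < dim_col (mat (Suc ?n) (Suc ?n) (\<lambda>(a,b). ?c a * ?F a b))"
    hence a: "a < Suc ?n" and b: "b < Suc ?n" by auto
    show "Lt t $$ (a,b) = mat (Suc ?n) (Suc ?n) (\<lambda>(a,b). ?c a * ?F a b) $$ (a,b)"
    proof (cases "a < ?n")
      case True thus ?thesis using a b by (simp add: Lt_def rowL_def nth_append)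
    next
      case False
      hence an: "a = ?n" using a by simp
      have "poly (G b) t = Pv t * (t^b - fL t * (t+\<eta>)^b)"
        unfolding poly_G using fL_key[OF t] by (simp add: algebra_simps)
      thus ?thesis using an b by (simp add: Lt_def)
    qed
  qed (auto simp: Lt_def)
  hence "det (Lt t) = (\<Prod>a<Suc ?n. ?c a) * det (mat (Suc ?n) (Suc ?n) (\<lambda>(a,b). ?F a b))"
    using det_scale_rows[where c = ?c and F = ?F and n = "Suc ?n"] by simp
  moreover have "(\<Prod>a<Suc ?n. ?c a) = Pv t" by (simp add: prod.lessThan_Suc)
  ultimately show ?thesis by simp
qed

lemma degree_G: "degree (G b) \<le> length xs + b"
proof -
  have d1: "degree (lp xs * monom 1 b) \<le> length xs + b"
    using degree_mult_le[of "lp xs" "monom 1 b"] conjunct1[OF degree_lp[of xs]] degree_monom_le[of "1::complex" b] by linarith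
  have "degree (lp (map (\<lambda>x. x + \<eta>) xs) * [:\<eta>,1:]^b) \<le> length xs + b"
    using degree_mult_le[of "lp (map (\<lambda>x. x + \<eta>) xs)" "[:\<eta>,1:]^b"] degree_lp[of "map (\<lambda>x. x + \<eta>) xs"]
      degree_linear_power[of \<eta> b] by simp
  hence d2: "degree (smult \<mu> (lp (map (\<lambda>x. x + \<eta>) xs) * [:\<eta>,1:]^b)) \<le> length xs + b"
    using degree_smult_le order_trans by blast
  show ?thesis unfolding G_def by (rule degree_diff_le[OF d1 d2])
qed

lemma coeff_G_top: "coeff (G b) (length xs + b) = 1 - \<mu>"
proof -
  have "coeff (lp xs * monom 1 b) (length xs + b) = 1"
    using coeff_mult_le[of "lp xs" "length xs" "monom 1 b" b] degree_lp[of xs] degree_monom_le[of "1::complex" b] by simp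
  moreover have "coeff (lp (map (\<lambda>x. x + \<eta>) xs) * [:\<eta>,1:]^b) (length xs + b) = 1"
    using coeff_mult_le[of "lp (map (\<lambda>x. x + \<eta>) xs)" "length xs" "[:\<eta>,1:]^b" b]
      degree_lp[of "map (\<lambda>x. x + \<eta>) xs"] degree_linear_power[of \<eta> b] coeff_linear_power[of \<eta> b] by simp
  ultimately show ?thesis unfolding G_def by simp
qed

lemma degree_PL: "degree PL \<le> length xs + length ys"
  unfolding PL_def
proof (rule degree_sum_le)
  fix b assume "b \<in> {..<Suc (length ys)}"
  thus "degree (smult (cofactor Kmat (length ys) b) (G b)) \<le> length xs + length ys"
    using degree_smult_le[of _ "G b"] degree_G[of b] by (meson add_le_cancel_left le_trans lessThan_iff less_Suc_eq_le)
qed simp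

lemma coeff_PL: "coeff PL (length xs + length ys) = (1 - \<mu>) * det (mat (length ys) (length ys) (\<lambda>(a,b). rowL a b))"
proof -
  let ?n = "length ys" and ?m = "length xs"
  have "coeff PL (?m + ?n) = (\<Sum>b<Suc ?n. cofactor Kmat ?n b * coeff (G b) (?m + ?n))"
    unfolding PL_def by (simp add: coeff_sum)
  also have "\<dots> = (\<Sum>b<Suc ?n. if b = ?n then cofactor Kmat ?n ?n * (1 - \<mu>) else 0)"
  proof (rule sum.cong[OF refl])
    fix b assume b: "b \<in> {..<Suc ?n}"
    show "cofactor Kmat ?n b * coeff (G b) (?m + ?n) = (if b = ?n then cofactor Kmat ?n ?n * (1 - \<mu>) else 0)"
    proof (cases "b = ?n")
      case True thus ?thesis using coeff_G_top[of ?n] by simp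
    next
      case False
      hence "b < ?n" using b by simp
      hence "coeff (G b) (?m + ?n) = 0" using degree_G[of b] by (intro coeff_eq_0) linarith
      thus ?thesis using False by simp
    qed
  qed
  also have "\<dots> = cofactor Kmat ?n ?n * (1 - \<mu>)" by simp
  also have "cofactor Kmat ?n ?n = det (mat ?n ?n (\<lambda>(a,b). rowL a b))"
  proof -
    have "mat_delete Kmat ?n ?n = mat ?n ?n (\<lambda>(a,b). rowL a b)"
      by (rule eq_matI) (auto simp: mat_delete_def Kmat_def)
    thus ?thesis unfolding cofactor_def by simp
  qed
  finally show ?thesis by simp
qed


lemma PL_at_y:
  assumes c: "c < length ys" and nx: "ys!c \<notin> set xs"
  shows "poly PL (ys!c) = 0"
proof -
  let ?n = "length ys" and ?t = "ys!c"
  let ?A = "mat (Suc ?n) (Suc ?n) (\<lambda>(a,b). (ys@[?t])!a^b - fL ((ys@[?t])!a) * ((ys@[?t])!a+\<eta>)^b)"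
  have "row ?A c = row ?A ?n"
    by (rule eq_vecI) (use c in \<open>auto simp: nth_append\<close>)
  hence "det ?A = 0"
    by (intro det_identical_rows[of _ "Suc ?n" c ?n]) (use c in auto)
  thus ?thesis unfolding poly_PL det_Lt[OF nx] by simp
qed

lemma PL_at_x:
  assumes a: "a < length xs" and d: "distinct xs" and disj: "set xs \<inter> set ys = {}"
  shows "poly PL (xs!a) = - \<mu> * Pe (xs!a) * prod_list (map (\<lambda>y. xs!a + \<eta> - y) ys)
     * det (mat (length ys) (length ys) (\<lambda>(i,j). ys!i^j - \<mu> * Eg (-\<eta>) (remove1 (xs!a) xs) (ys!i) * (ys!i+\<eta>)^j))"
proof -
  let ?n = "length ys" and ?x = "xs!a"
  let ?z = "?x + \<eta>"
  let ?f' = "\<lambda>y. \<mu> * Eg (-\<eta>) (remove1 ?x xs) y"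
  have xin: "?x \<in> set xs" using a by simp
  have Pv0: "Pv ?x = 0" unfolding Pv_def using xin by (induct xs) auto
  let ?c = "\<lambda>i. if i = ?n then - \<mu> * Pe ?x else 1"
  let ?B = "\<lambda>i b. if i < ?n then rowL i b else ?z^b"
  have "Lt ?x = mat (Suc ?n) (Suc ?n) (\<lambda>(i,b). ?c i * ?B i b)"
  proof (rule eq_matI)
    fix i b assume "i < dim_row (mat (Suc ?n) (Suc ?n) (\<lambda>(i,b). ?c i * ?B i b))"
      "b < dim_col (mat (Suc ?n) (Suc ?n) (\<lambda>(i,b). ?c i * ?B i b))"
    hence i: "i < Suc ?n" and b: "b < Suc ?n" by auto
    show "Lt ?x $$ (i,b) = mat (Suc ?n) (Suc ?n) (\<lambda>(i,b). ?c i * ?B i b) $$ (i,b)"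
    proof (cases "i < ?n")
      case True thus ?thesis using b by (simp add: Lt_def)
    next
      case False
      hence "i = ?n" using i by simp
      thus ?thesis using b by (simp add: Lt_def poly_G Pv0)
    qed
  qed (simp_all add: Lt_def)
  hence "det (Lt ?x) = (\<Prod>i<Suc ?n. ?c i) * det (mat (Suc ?n) (Suc ?n) (\<lambda>(i,b). ?B i b))"
    using det_scale_rows[where c = ?c and F = ?B and n = "Suc ?n"] by simp
  also have "(\<Prod>i<Suc ?n. ?c i) = - \<mu> * Pe ?x" by (simp add: prod.lessThan_Suc)
  also have "det (mat (Suc ?n) (Suc ?n) (\<lambda>(i,b). ?B i b))
      = (-1)^?n * det (mat ?n ?n (\<lambda>(i,j). (ys!i - ?z) * (ys!i^j - ?f' (ys!i) * (ys!i+\<eta>)^j)))"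
  proof -
    have "det (mat (Suc ?n) (Suc ?n) (\<lambda>(i,b). ?B i b))
      = (-1)^?n * det (mat ?n ?n (\<lambda>(i,j). mat (Suc ?n) (Suc ?n) (\<lambda>(i,b). ?B i b) $$ (i, Suc j)
           - ?z * mat (Suc ?n) (Suc ?n) (\<lambda>(i,b). ?B i b) $$ (i,j)))"
      by (rule shift_det) auto
    also have "mat ?n ?n (\<lambda>(i,j). mat (Suc ?n) (Suc ?n) (\<lambda>(i,b). ?B i b) $$ (i, Suc j)
           - ?z * mat (Suc ?n) (Suc ?n) (\<lambda>(i,b). ?B i b) $$ (i,j))
        = mat ?n ?n (\<lambda>(i,j). (ys!i - ?z) * (ys!i^j - ?f' (ys!i) * (ys!i+\<eta>)^j))"
    proof (rule eq_matI)
      fix i j assume "i < dim_row (mat ?n ?n (\<lambda>(i,j). (ys!i - ?z) * (ys!i^j - ?f' (ys!i) * (ys!i+\<eta>)^j)))"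
        "j < dim_col (mat ?n ?n (\<lambda>(i,j). (ys!i - ?z) * (ys!i^j - ?f' (ys!i) * (ys!i+\<eta>)^j)))"
      hence i: "i < ?n" and j: "j < ?n" by auto
      let ?y = "ys!i"
      have "?y \<in> set ys" using i by simp
      hence yx: "?y \<noteq> ?x" using disj xin by (metis IntI empty_iff)
      have "Eg (-\<eta>) xs ?y = (?y - ?x + - \<eta>) / (?y - ?x) * Eg (-\<eta>) (remove1 ?x xs) ?y"
        unfolding Eg_def by (rule prod_list_remove1[OF xin])
      hence k0: "Eg (-\<eta>) xs ?y * (?y - ?x) = Eg (-\<eta>) (remove1 ?x xs) ?y * (?y - ?x - \<eta>)"
        using yx by (simp add: field_simps)
      have "fL ?y * (?y + \<eta> - ?z) = \<mu> * (Eg (-\<eta>) xs ?y * (?y - ?x))"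
        by (simp add: fL_def algebra_simps)
      also have "\<dots> = ?f' ?y * (?y - ?z)" unfolding k0 by (simp add: algebra_simps)
      finally have key: "fL ?y * (?y + \<eta> - ?z) = ?f' ?y * (?y - ?z)" .
      have "?y^Suc j - fL ?y * (?y + \<eta>)^Suc j - ?z * (?y^j - fL ?y * (?y + \<eta>)^j)
          = (?y - ?z) * ?y^j - (fL ?y * (?y + \<eta> - ?z)) * (?y + \<eta>)^j"
        by (simp add: algebra_simps)
      also have "\<dots> = (?y - ?z) * (?y^j - ?f' ?y * (?y+\<eta>)^j)" unfolding key by (simp add: algebra_simps)
      finally show "mat ?n ?n (\<lambda>(i,j). mat (Suc ?n) (Suc ?n) (\<lambda>(i,b). ?B i b) $$ (i, Suc j)
           - ?z * mat (Suc ?n) (Suc ?n) (\<lambda>(i,b). ?B i b) $$ (i,j)) $$ (i,j)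
        = mat ?n ?n (\<lambda>(i,j). (ys!i - ?z) * (ys!i^j - ?f' (ys!i) * (ys!i+\<eta>)^j)) $$ (i,j)"
        using i j by (simp add: rowL_def)
    qed auto
    finally show ?thesis .
  qed
  also have "det (mat ?n ?n (\<lambda>(i,j). (ys!i - ?z) * (ys!i^j - ?f' (ys!i) * (ys!i+\<eta>)^j)))
     = (\<Prod>i<?n. ys!i - ?z) * det (mat ?n ?n (\<lambda>(i,j). ys!i^j - ?f' (ys!i) * (ys!i+\<eta>)^j))"
    using det_scale_rows[where c = "\<lambda>i. ys!i - ?z" and F = "\<lambda>i j. ys!i^j - ?f' (ys!i) * (ys!i+\<eta>)^j" and n = ?n]
    by simp
  finally have "det (Lt ?x) = - \<mu> * Pe ?x * ((-1)^?n * (\<Prod>i<?n. ys!i - ?z))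
     * det (mat ?n ?n (\<lambda>(i,j). ys!i^j - ?f' (ys!i) * (ys!i+\<eta>)^j))" by (simp only: mult_ac)
  also have "(-1)^?n * (\<Prod>i<?n. ys!i - ?z) = prod_list (map (\<lambda>y. ?z - y) ys)"
    unfolding prod_neg_swap prod_list_nth ..
  finally show ?thesis unfolding poly_PL by (simp add: algebra_simps)
qed

end




context
  fixes \<eta> \<mu> :: complex and xs ys :: "complex list"
begin

definition "cR x = Eg \<eta> ys x"
definition "FR t x i = (x - t) * x^i - \<mu> * cR x * (x - t + \<eta>) * (x - \<eta>)^i"
definition "MRp = mat (length xs) (length xs) (\<lambda>(a,i). [: xs!a * xs!a^i - \<mu> * cR (xs!a) * (xs!a + \<eta>) * (xs!a - \<eta>)^i,
     - (xs!a^i) + \<mu> * cR (xs!a) * (xs!a - \<eta>)^i :])"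
definition "PR = det MRp"

lemma poly_PR: "poly PR t = det (mat (length xs) (length xs) (\<lambda>(a,i). FR t (xs!a) i))"
proof -
  have "map_mat (\<lambda>p. poly p t) MRp = mat (length xs) (length xs) (\<lambda>(a,i). FR t (xs!a) i)"
    by (rule eq_matI) (auto simp: MRp_def FR_def algebra_simps)
  thus ?thesis unfolding PR_def poly_det by simp
qed

lemma det_FR:
  assumes t: "t \<notin> set xs"
  shows "det (mat (length xs) (length xs) (\<lambda>(a,i). FR t (xs!a) i))
    = prod_list (map (\<lambda>x. x - t) xs) * det (mat (length xs) (length xs) (\<lambda>(a,i). xs!a^i - \<mu> * Eg \<eta> (ys@[t]) (xs!a) * (xs!a + -\<eta>)^i))"
proof -
  let ?m = "length xs"
  let ?F = "\<lambda>a i. xs!a^i - \<mu> * Eg \<eta> (ys@[t]) (xs!a) * (xs!a + -\<eta>)^i"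
  have "mat ?m ?m (\<lambda>(a,i). FR t (xs!a) i) = mat ?m ?m (\<lambda>(a,i). (xs!a - t) * ?F a i)"
  proof (rule eq_matI)
    fix a i assume "a < dim_row (mat ?m ?m (\<lambda>(a,i). (xs!a - t) * ?F a i))"
      "i < dim_col (mat ?m ?m (\<lambda>(a,i). (xs!a - t) * ?F a i))"
    hence a: "a < ?m" and i: "i < ?m" by auto
    let ?x = "xs!a"
    have xt: "?x - t \<noteq> 0" using t a by auto
    have "Eg \<eta> (ys@[t]) ?x = cR ?x * ((?x - t + \<eta>) / (?x - t))"
      unfolding Eg_def cR_def by simp
    hence e: "(?x - t) * Eg \<eta> (ys@[t]) ?x = cR ?x * (?x - t + \<eta>)" using xt by simp
    have "(?x - t) * ?F a i = (?x - t) * ?x^i - \<mu> * ((?x - t) * Eg \<eta> (ys@[t]) ?x) * (?x + -\<eta>)^i"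
      by (simp add: algebra_simps)
    also have "\<dots> = FR t ?x i" unfolding e FR_def by (simp add: algebra_simps)
    finally have "(?x - t) * ?F a i = FR t ?x i" .
    thus "mat ?m ?m (\<lambda>(a,i). FR t (xs!a) i) $$ (a,i) = mat ?m ?m (\<lambda>(a,i). (xs!a - t) * ?F a i) $$ (a,i)"
      using a i by simp
  qed auto
  hence "det (mat ?m ?m (\<lambda>(a,i). FR t (xs!a) i)) = (\<Prod>a<?m. xs!a - t) * det (mat ?m ?m (\<lambda>(a,i). ?F a i))"
    using det_scale_rows[where c = "\<lambda>a. xs!a - t" and F = ?F and n = ?m] by simp
  thus ?thesis unfolding prod_list_nth by simp
qed

lemma degree_PR: "degree PR \<le> length xs"
proof -
  have "degree PR \<le> 1 * length xs"
    unfolding PR_def by (rule degree_det_le) (auto simp: MRp_def)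
  thus ?thesis by simp
qed

lemma coeff_PR: "coeff PR (length xs) = (-1)^length xs * det (mat (length xs) (length xs) (\<lambda>(a,i). xs!a^i - \<mu> * cR (xs!a) * (xs!a + -\<eta>)^i))"
proof -
  let ?m = "length xs"
  have "coeff PR ?m = det (map_mat (\<lambda>p. coeff p 1) MRp)"
    unfolding PR_def by (rule coeff_det_linear) (auto simp: MRp_def)
  also have "map_mat (\<lambda>p. coeff p 1) MRp = (-1) \<cdot>\<^sub>m mat ?m ?m (\<lambda>(a,i). xs!a^i - \<mu> * cR (xs!a) * (xs!a + -\<eta>)^i)"
    by (rule eq_matI) (auto simp: MRp_def)
  finally show ?thesis by simp
qed


lemma PR_at_x:
  assumes a: "a < length xs" and d: "distinct xs"
  shows "poly PR (xs!a) / Vand xs = - \<mu> * \<eta> * cR (xs!a) * prod_list (map (\<lambda>x'. x' - xs!a + \<eta>) (remove1 (xs!a) xs))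
     * Ag (-\<eta>) (remove1 (xs!a) xs) (\<lambda>x. \<mu> * cR x)"
proof -
  let ?x = "xs!a"
  define r where "r = remove1 ?x xs"
  let ?xs2 = "r @ [?x]"
  let ?m = "length r"
  let ?z = "?x - \<eta>"
  have xin: "?x \<in> set xs" using a by simp
  have lenr: "length xs = Suc ?m" unfolding r_def using xin by (simp add: length_remove1) (metis Suc_pred length_pos_if_in_set)
  have ms: "mset ?xs2 = mset xs" unfolding r_def using xin by simp
  have dr: "distinct r" unfolding r_def using d by simp
  have xr: "?x \<notin> set r" unfolding r_def using d by simp
  have len2: "length ?xs2 = Suc ?m" by simp
  have "poly PR ?x / Vand xs = det (mat (length xs) (length xs) (\<lambda>(i,j). FR ?x (xs!i) j)) / Vand xs"
    unfolding poly_PR ..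
  also have "\<dots> = det (mat (length ?xs2) (length ?xs2) (\<lambda>(i,j). FR ?x (?xs2!i) j)) / Vand ?xs2"
    by (rule perm_ratio[OF ms d, symmetric])
  finally have R1: "poly PR ?x / Vand xs = det (mat (Suc ?m) (Suc ?m) (\<lambda>(i,j). FR ?x (?xs2!i) j)) / Vand ?xs2"
    unfolding len2 .
  let ?c = "\<lambda>i. if i = ?m then - \<mu> * \<eta> * cR ?x else 1"
  let ?B = "\<lambda>i j. if i < ?m then FR ?x (r!i) j else ?z^j"
  have "mat (Suc ?m) (Suc ?m) (\<lambda>(i,j). FR ?x (?xs2!i) j) = mat (Suc ?m) (Suc ?m) (\<lambda>(i,j). ?c i * ?B i j)"
  proof (rule eq_matI)
    fix i j assume "i < dim_row (mat (Suc ?m) (Suc ?m) (\<lambda>(i,j). ?c i * ?B i j))"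
      "j < dim_col (mat (Suc ?m) (Suc ?m) (\<lambda>(i,j). ?c i * ?B i j))"
    hence i: "i < Suc ?m" and j: "j < Suc ?m" by auto
    show "mat (Suc ?m) (Suc ?m) (\<lambda>(i,j). FR ?x (?xs2!i) j) $$ (i,j) = mat (Suc ?m) (Suc ?m) (\<lambda>(i,j). ?c i * ?B i j) $$ (i,j)"
    proof (cases "i < ?m")
      case True thus ?thesis using j by (simp add: nth_append)
    next
      case False
      hence "i = ?m" using i by simp
      thus ?thesis using j by (simp add: FR_def)
    qed
  qed auto
  hence D1: "det (mat (Suc ?m) (Suc ?m) (\<lambda>(i,j). FR ?x (?xs2!i) j)) = (- \<mu> * \<eta> * cR ?x) * det (mat (Suc ?m) (Suc ?m) (\<lambda>(i,j). ?B i j))"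
    using det_scale_rows[where c = ?c and F = ?B and n = "Suc ?m"] by (simp add: prod.lessThan_Suc)
  let ?N = "\<lambda>i j. (r!i)^j - \<mu> * cR (r!i) * (r!i + -\<eta>)^j"
  have D2: "det (mat (Suc ?m) (Suc ?m) (\<lambda>(i,j). ?B i j)) = (-1)^?m * det (mat ?m ?m (\<lambda>(i,j). ((r!i - ?x) * (r!i - ?x + \<eta>)) * ?N i j))"
  proof -
    have "det (mat (Suc ?m) (Suc ?m) (\<lambda>(i,j). ?B i j))
      = (-1)^?m * det (mat ?m ?m (\<lambda>(i,j). mat (Suc ?m) (Suc ?m) (\<lambda>(i,j). ?B i j) $$ (i, Suc j)
           - ?z * mat (Suc ?m) (Suc ?m) (\<lambda>(i,j). ?B i j) $$ (i,j)))"
      by (rule shift_det) auto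
    also have "mat ?m ?m (\<lambda>(i,j). mat (Suc ?m) (Suc ?m) (\<lambda>(i,j). ?B i j) $$ (i, Suc j)
           - ?z * mat (Suc ?m) (Suc ?m) (\<lambda>(i,j). ?B i j) $$ (i,j))
       = mat ?m ?m (\<lambda>(i,j). ((r!i - ?x) * (r!i - ?x + \<eta>)) * ?N i j)"
      by (rule eq_matI) (auto simp: FR_def algebra_simps)
    finally show ?thesis .
  qed
  have D3: "det (mat ?m ?m (\<lambda>(i,j). ((r!i - ?x) * (r!i - ?x + \<eta>)) * ?N i j))
     = (\<Prod>i<?m. (r!i - ?x) * (r!i - ?x + \<eta>)) * det (mat ?m ?m (\<lambda>(i,j). ?N i j))"
    using det_scale_rows[where c = "\<lambda>i. (r!i - ?x) * (r!i - ?x + \<eta>)" and F = ?N and n = ?m] by simp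
  have S: "(-1)^?m * (\<Prod>i<?m. r!i - ?x) = (\<Prod>i<?m. ?x - r!i)" by (rule prod_neg_swap)
  have V: "Vand ?xs2 = Vand r * (\<Prod>i<?m. ?x - r!i)" by (rule Vand_snoc)
  have nz1: "(\<Prod>i<?m. ?x - r!i) \<noteq> 0"
    unfolding prod_list_nth[symmetric] by (rule prod_list_nonzero) (use xr in auto)
  have nz2: "Vand r \<noteq> 0" by (rule Vand_nonzero[OF dr])
  have Ag: "Ag (-\<eta>) r (\<lambda>x. \<mu> * cR x) = det (mat ?m ?m (\<lambda>(i,j). ?N i j)) / Vand r"
    unfolding Ag_def by (simp add: mult.assoc)
  have P: "prod_list (map (\<lambda>x'. x' - ?x + \<eta>) r) = (\<Prod>i<?m. r!i - ?x + \<eta>)" by (rule prod_list_nth)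
  have "poly PR ?x / Vand xs = (- \<mu> * \<eta> * cR ?x) * (((-1)^?m * (\<Prod>i<?m. r!i - ?x)) * (\<Prod>i<?m. r!i - ?x + \<eta>))
      * det (mat ?m ?m (\<lambda>(i,j). ?N i j)) / (Vand r * (\<Prod>i<?m. ?x - r!i))"
    unfolding R1 D1 D2 D3 V prod.distrib by (simp only: mult_ac)
  also have "\<dots> = - \<mu> * \<eta> * cR ?x * (\<Prod>i<?m. r!i - ?x + \<eta>) * (det (mat ?m ?m (\<lambda>(i,j). ?N i j)) / Vand r)"
    unfolding S using nz1 nz2 by (simp add: field_simps)
  finally have X: "poly PR ?x / Vand xs = - \<mu> * \<eta> * cR ?x * (\<Prod>i<?m. r!i - ?x + \<eta>) * (det (mat ?m ?m (\<lambda>(i,j). ?N i j)) / Vand r)" .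
  show ?thesis unfolding r_def[symmetric] Ag P by (rule X)
qed

end




lemma poly_eq_top:
  fixes p q :: "complex poly"
  assumes dp: "degree p \<le> D" and dq: "degree q \<le> D" and c: "coeff p D = coeff q D"
    and fin: "finite A" and card: "card A = D" and ev: "\<And>x. x \<in> A \<Longrightarrow> poly p x = poly q x"
  shows "p = q"
proof (rule ccontr)
  assume ne: "p \<noteq> q"
  define d where "d = p - q"
  have dnz: "d \<noteq> 0" using ne unfolding d_def by simp
  have dd: "degree d \<le> D" unfolding d_def using dp dq by (rule degree_diff_le)
  have cd: "coeff d D = 0" unfolding d_def using c by simp
  have "degree d \<noteq> D" using cd dnz by (metis leading_coeff_0_iff)
  hence lt: "degree d < D" using dd by simp
  have "d = 0"
    by (rule poly_eqI_degree[of A]) (use ev lt card in \<open>auto simp: d_def\<close>)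
  thus False using dnz by simp
qed

lemma prod_list_neg: "prod_list (map (\<lambda>x. - g x) r) = (-1)^length r * prod_list (map (g::_\<Rightarrow>'a::comm_ring_1) r)"
  by (induct r) auto

lemma Eg_Nil[simp]: "Eg e [] y = 1" by (simp add: Eg_def)

lemma core:
  fixes \<eta> \<mu> :: complex
  assumes mu: "\<mu> \<noteq> 1"
  shows "distinct ys \<Longrightarrow> distinct xs \<Longrightarrow> set xs \<inter> set ys = {} \<Longrightarrow>
    Ag \<eta> ys (\<lambda>y. \<mu> * Eg (-\<eta>) xs y) = (1-\<mu>) powi (int (length ys) - int (length xs)) * Ag (-\<eta>) xs (\<lambda>x. \<mu> * Eg \<eta> ys x)"
proof (induct ys arbitrary: xs rule: rev_induct)
  case Nil
  have mu': "1 - \<mu> \<noteq> 0" using mu by simp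
  have "det (mat (length xs) (length xs) (\<lambda>(a,b). xs!a^b - \<mu>*(xs!a + -\<eta>)^b)) = (1-\<mu>)^length xs * Vand xs"
    by (rule det_base)
  hence "Ag (-\<eta>) xs (\<lambda>x. \<mu> * Eg \<eta> [] x) = (1-\<mu>)^length xs"
    unfolding Ag_def using Vand_nonzero[OF Nil(2)] by simp
  thus ?case using mu' by (simp add: power_int_minus field_simps)
next
  case (snoc t ys)
  have dys: "distinct ys" and tys: "t \<notin> set ys" using snoc(2) by auto
  have dxs: "distinct xs" using snoc(3) .
  have disj: "set xs \<inter> set ys = {}" and txs: "t \<notin> set xs" using snoc(4) by auto
  have IH: "\<And>xs. distinct xs \<Longrightarrow> set xs \<inter> set ys = {} \<Longrightarrow>
    Ag \<eta> ys (\<lambda>y. \<mu> * Eg (-\<eta>) xs y) = (1-\<mu>) powi (int (length ys) - int (length xs)) * Ag (-\<eta>) xs (\<lambda>x. \<mu> * Eg \<eta> ys x)"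
    using snoc(1) dys by blast
  let ?n = "length ys" and ?m = "length xs"
  have mu': "1 - \<mu> \<noteq> 0" using mu by simp
  have VyN: "Vand ys \<noteq> 0" by (rule Vand_nonzero[OF dys])
  have VxN: "Vand xs \<noteq> 0" by (rule Vand_nonzero[OF dxs])
  define Kc where "Kc = (1-\<mu>) powi (int (Suc ?n) - int ?m) * (-1)^?m"
  define LL where "LL = smult (1 / Vand ys) (PL \<eta> \<mu> xs ys)"
  define RR where "RR = smult (Kc / Vand xs) (PR \<eta> \<mu> xs ys * lp ys)"
  have AgL: "\<And>xs'. Ag \<eta> ys (\<lambda>y. \<mu> * Eg (-\<eta>) xs' y) = det (mat ?n ?n (\<lambda>(a,b). rowL \<eta> \<mu> xs' ys a b)) / Vand ys"
    unfolding Ag_def rowL_def fL_def by simp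
  have pw: "(1-\<mu>) powi (int (Suc ?n) - int ?m) = (1-\<mu>) * (1-\<mu>) powi (int ?n - int ?m)"
  proof -
    have e: "int (Suc ?n) - int ?m = (int ?n - int ?m) + 1" by simp
    show ?thesis unfolding e by (rule power_int_add_1') (use mu' in auto)
  qed
  have LLRR: "LL = RR"
  proof (rule poly_eq_top[where D = "?m + ?n" and A = "set (xs @ ys)"])
    show "degree LL \<le> ?m + ?n" unfolding LL_def using degree_smult_le degree_PL order_trans by blast
    show "degree RR \<le> ?m + ?n"
    proof -
      have "degree (PR \<eta> \<mu> xs ys * lp ys) \<le> ?m + ?n"
        using degree_mult_le[of "PR \<eta> \<mu> xs ys" "lp ys"] degree_PR[of \<eta> \<mu> xs ys] conjunct1[OF degree_lp[of ys]] by linarith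
      thus ?thesis unfolding RR_def using degree_smult_le order_trans by blast
    qed
    show "coeff LL (?m + ?n) = coeff RR (?m + ?n)"
    proof -
      have "coeff LL (?m + ?n) = (1 - \<mu>) * Ag \<eta> ys (\<lambda>y. \<mu> * Eg (-\<eta>) xs y)"
        unfolding LL_def coeff_smult coeff_PL AgL by simp
      also have "\<dots> = (1-\<mu>) powi (int (Suc ?n) - int ?m) * Ag (-\<eta>) xs (\<lambda>x. \<mu> * Eg \<eta> ys x)"
        unfolding IH[OF dxs disj] pw by simp
      also have "\<dots> = coeff RR (?m + ?n)"
      proof -
        have "coeff (PR \<eta> \<mu> xs ys * lp ys) (?m + ?n) = coeff (PR \<eta> \<mu> xs ys) ?m * coeff (lp ys) ?n"
          by (rule coeff_mult_le[OF degree_PR]) (simp add: degree_lp)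
        also have "\<dots> = (-1)^?m * (Vand xs * Ag (-\<eta>) xs (\<lambda>x. \<mu> * Eg \<eta> ys x))"
          unfolding coeff_PR degree_lp[THEN conjunct2] Ag_def cR_def using VxN by (simp add: mult.assoc)
        finally show ?thesis unfolding RR_def Kc_def using VxN by (simp add: field_simps power_mult_distrib[symmetric])
      qed
      finally show ?thesis .
    qed
    show "finite (set (xs @ ys))" by simp
    show "card (set (xs @ ys)) = ?m + ?n"
      using dxs dys disj by (simp add: card_Un_disjoint distinct_card[symmetric])
    fix p assume "p \<in> set (xs @ ys)"
    then consider (x) a where "a < ?m" "p = xs!a" | (y) c where "c < ?n" "p = ys!c"
      by (auto simp: in_set_conv_nth)
    thus "poly LL p = poly RR p"
    proof cases
      case y
      have "ys!c \<notin> set xs" using y disj by (metis IntI empty_iff nth_mem)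
      hence "poly LL p = 0" unfolding LL_def using PL_at_y y by simp
      moreover have "poly (lp ys) p = 0" unfolding poly_lp using y by (simp add: prod_list_zero_iff)
      ultimately show ?thesis unfolding RR_def by simp
    next
      case x
      let ?x = "xs!a"
      define r where "r = remove1 ?x xs"
      have xin: "?x \<in> set xs" using x by simp
      have lenr: "?m = Suc (length r)" unfolding r_def using xin
        by (simp add: length_remove1) (metis Suc_pred length_pos_if_in_set)
      have dr: "distinct r" unfolding r_def using dxs by simp
      have disjr: "set r \<inter> set ys = {}" unfolding r_def using disj set_remove1_subset[of ?x xs] by blast
      have xys: "?x \<notin> set ys" using disj xin by blast
      have IHr: "Ag \<eta> ys (\<lambda>y. \<mu> * Eg (-\<eta>) r y) = (1-\<mu>) powi (int (Suc ?n) - int ?m) * Ag (-\<eta>) r (\<lambda>x. \<mu> * Eg \<eta> ys x)"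
        using IH[OF dr disjr] lenr by simp
      have L: "poly LL ?x = - \<mu> * Pe \<eta> xs ?x * prod_list (map (\<lambda>y. ?x + \<eta> - y) ys) * Ag \<eta> ys (\<lambda>y. \<mu> * Eg (-\<eta>) r y)"
        unfolding LL_def poly_smult PL_at_x[OF x(1) dxs disj] r_def[symmetric] Ag_def using VyN by simp
      have R: "poly RR ?x = Kc * (- \<mu> * \<eta> * cR \<eta> ys ?x * prod_list (map (\<lambda>x'. x' - ?x + \<eta>) r)
           * Ag (-\<eta>) r (\<lambda>x. \<mu> * Eg \<eta> ys x)) * prod_list (map (\<lambda>y. ?x - y) ys)"
      proof -
        have "poly RR ?x = Kc * (poly (PR \<eta> \<mu> xs ys) ?x / Vand xs) * poly (lp ys) ?x"
          unfolding RR_def by simp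
        thus ?thesis unfolding PR_at_x[OF x(1) dxs] r_def[symmetric] poly_lp cR_def by simp
      qed
      have c1: "cR \<eta> ys ?x * prod_list (map (\<lambda>y. ?x - y) ys) = prod_list (map (\<lambda>y. ?x + \<eta> - y) ys)"
      proof -
        have nz: "prod_list (map (\<lambda>y. ?x - y) ys) \<noteq> 0" by (rule prod_list_nonzero) (use xys in auto)
        have "cR \<eta> ys ?x = prod_list (map (\<lambda>y. ?x + \<eta> - y) ys) / prod_list (map (\<lambda>y. ?x - y) ys)"
          unfolding cR_def Eg_def prod_list_div[symmetric] by (simp add: algebra_simps)
        thus ?thesis using nz by simp
      qed
      have c2: "Pe \<eta> xs ?x = (-1)^?m * \<eta> * prod_list (map (\<lambda>x'. x' - ?x + \<eta>) r)"
      proof -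
        have "Pe \<eta> xs ?x = (?x - (?x + \<eta>)) * prod_list (map (\<lambda>x'. ?x - (x' + \<eta>)) r)"
          unfolding Pe_def r_def by (rule prod_list_remove1[OF xin])
        also have "prod_list (map (\<lambda>x'. ?x - (x' + \<eta>)) r) = (-1)^length r * prod_list (map (\<lambda>x'. x' - ?x + \<eta>) r)"
          using prod_list_neg[of "\<lambda>x'. x' - ?x + \<eta>" r] by (simp add: algebra_simps)
        finally show ?thesis unfolding lenr by simp
      qed
      show ?thesis unfolding x(2) L R IHr Kc_def c2 c1[symmetric]
        by (simp add: algebra_simps power_mult_distrib[symmetric])
    qed
  qed
  have PvN: "Pv xs t \<noteq> 0" unfolding Pv_def by (rule prod_list_nonzero) (use txs in auto)
  have lpN: "poly (lp ys) t \<noteq> 0" unfolding poly_lp by (rule prod_list_nonzero) (use tys in auto)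
  have VN: "Vand (ys @ [t]) = Vand ys * poly (lp ys) t"
    unfolding Vand_snoc poly_lp prod_list_nth by simp
  have "poly LL t = Pv xs t * poly (lp ys) t * Ag \<eta> (ys@[t]) (\<lambda>y. \<mu> * Eg (-\<eta>) xs y)"
    unfolding LL_def poly_smult poly_PL det_Lt[OF txs] Ag_def VN fL_def using VyN lpN by simp
  moreover have "poly RR t = Pv xs t * poly (lp ys) t * ((1-\<mu>) powi (int (length (ys@[t])) - int ?m) * Ag (-\<eta>) xs (\<lambda>x. \<mu> * Eg \<eta> (ys@[t]) x))"
  proof -
    have "prod_list (map (\<lambda>x. x - t) xs) = (-1)^?m * Pv xs t"
      unfolding Pv_def using prod_list_neg[of "\<lambda>x. t - x" xs] by simp
    thus ?thesis unfolding RR_def poly_smult poly_mult poly_PR det_FR[OF txs] Ag_def Kc_def using VxN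
      by (simp add: algebra_simps power_mult_distrib[symmetric])
  qed
  ultimately show ?case using LLRR PvN lpN by simp
qed



theorem mainTheorem7:
  fixes eta mu :: complex and xs ys :: "complex list"
  assumes "eta \<noteq> 0" and "mu \<noteq> 1"
    and "distinct xs" and "distinct ys"
    and "set xs \<inter> set ys = {}"
  shows "Aplus eta ys (\<lambda>y. mu * Eminus eta xs y)
       = (1 - mu) powi (int (length ys) - int (length xs)) * Aminus eta xs (\<lambda>x. mu * Eplus eta ys x)"
proof -
  have e1: "(\<lambda>y. mu * Eminus eta xs y) = (\<lambda>y. mu * Eg (-eta) xs y)"
    by (rule ext) (simp add: Eminus_def Eg_def prod_list_nth)
  have e2: "(\<lambda>x. mu * Eplus eta ys x) = (\<lambda>x. mu * Eg eta ys x)"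
    by (rule ext) (simp add: Eplus_def Eg_def prod_list_nth)
  have a1: "Aplus eta ys f = Ag eta ys f" for f unfolding Aplus_def Ag_def ..
  have a2: "Aminus eta xs f = Ag (-eta) xs f" for f unfolding Aminus_def Ag_def by simp
  show ?thesis unfolding e1 e2 a1 a2 by (rule core[OF assms(2) assms(4) assms(3) assms(5)])
qed

end
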